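(* Let $(S,\mathsf d)$ be a complete separable metric space and $\mathbf p$ a Borel probability measure on it. For $\varepsilon>0$ and $k\in\mathbb{N}_0$ we have $0\le p_{\varepsilon,k}\le1$, $p_{\varepsilon,0}=0$, $p_{\varepsilon,1}=\int_S\mathbf p(B(x,\varepsilon))\,d\mathbf p(x)$, and $\lim_{k\to\infty}p_{\varepsilon,k}=1$. Moreover, $\operatorname{supp}\mathbf p$ is compact if and only if \[\underline{\mathbf p}_\varepsilon:=\inf_{x\in\operatorname{supp}\mathbf p}\mathbf p(B(x,\varepsilon))>0\quad\text{for every }\varepsilon>0,\] and in this case $p_{\varepsilon,k}\ge1-(1-\underline{\mathbf p}_\varepsilon)^k$, so $p_{\varepsilon,k}\to1$ exponentially fast as $k\to\infty$.
   Context: $B(x,\varepsilon):=\{y:\mathsf d(x,y)<\varepsilon\}$. The $(\varepsilon,k)$-subcovering probability is $p_{\varepsilon,k}:=\mathbb P\big(X\in\bigcup_{i=1}^kB(X_i,\varepsilon)\big)$, where $X,X_1,\dots,X_k$ are i.i.d. with law $\mathbf p$ (the union is empty for $k=0$). *)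

theory Defs
  imports "HOL-Probability.Probability"
begin

text \<open>(eps,k)-subcovering probability: P(X in the union of B(X_i,eps), i=1..k),
  X = coordinate 0, X_1..X_k = coordinates 1..k of the i.i.d. product measure.\<close>
definition subcov_prob :: "'a::metric_space measure \<Rightarrow> real \<Rightarrow> nat \<Rightarrow> real" where
  "subcov_prob M \<epsilon> k =
     measure (PiM {0..k} (\<lambda>_. M)) {\<omega> \<in> space (PiM {0..k} (\<lambda>_. M)). \<exists>i\<in>{1..k}. \<omega> 0 \<in> ball (\<omega> i) \<epsilon>}"

definition supp :: "'a::metric_space measure \<Rightarrow> 'a set" where
  "supp M = {x. \<forall>e>0. measure M (ball x e) > 0}"

definition inf_ball_mass :: "'a::metric_space measure \<Rightarrow> real \<Rightarrow> real" where
  "inf_ball_mass M \<epsilon> = (INF x\<in>supp M. measure M (ball x \<epsilon>))"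

end

theory Submission imports Defs begin

lemma ball_mass_meas:
  fixes M :: "'a::polish_space measure"
  assumes "prob_space M" and "sets M = sets borel"
  shows "(\<lambda>x. measure M (ball x e)) \<in> borel_measurable M"
proof -
  interpret prob_space M by fact
  have sp: "space M = UNIV" using assms(2) sets_eq_imp_space_eq by fastforce
  have fm: "fst \<in> borel_measurable (M \<Otimes>\<^sub>M M)" "snd \<in> borel_measurable (M \<Otimes>\<^sub>M M)"
    using measurable_fst measurable_snd measurable_cong_sets[OF refl assms(2)] by blast+
  define Q where "Q = {p \<in> space (M \<Otimes>\<^sub>M M). dist (fst p) (snd p) < e}"
  have Q: "Q \<in> sets (M \<Otimes>\<^sub>M M)" unfolding Q_def using fm by measurable
  have "(\<lambda>x. emeasure M (Pair x -` Q)) \<in> borel_measurable M"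
    by (rule measurable_emeasure_Pair[OF Q])
  moreover have "Pair x -` Q = ball x e" for x
    by (auto simp: Q_def space_pair_measure sp ball_def)
  ultimately have "(\<lambda>x. emeasure M (ball x e)) \<in> borel_measurable M" by simp
  then have "(\<lambda>x. enn2real (emeasure M (ball x e))) \<in> borel_measurable M" by measurable
  then show ?thesis by (simp add: measure_def)
qed

lemma key_formula:
  fixes M :: "'a::polish_space measure"
  assumes "prob_space M" and "sets M = sets borel"
  shows "subcov_prob M e k = (\<integral>x. 1 - (1 - measure M (ball x e)) ^ k \<partial>M)"
proof -
  interpret prob_space M by fact
  interpret product_sigma_finite "\<lambda>_::nat. M"
    by (simp add: product_sigma_finite_def prob_space_imp_sigma_finite assms(1))
  have sp: "space M = UNIV" using assms(2) sets_eq_imp_space_eq by fastforce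
  have ball_sets: "ball x e \<in> sets M" for x using assms(2) by simp
  define P where "P = PiM {0..k} (\<lambda>_. M)"
  define A where "A = {\<omega> \<in> space P. \<exists>i\<in>{1..k}. \<omega> 0 \<in> ball (\<omega> i) e}"
  have cm: "(\<lambda>\<omega>. \<omega> i) \<in> borel_measurable P" if "i \<in> {0..k}" for i
    using measurable_component_singleton[OF that, of "\<lambda>_. M"] measurable_cong_sets[OF refl assms(2)]
    unfolding P_def by blast
  have Aeq: "A = (\<Union>i\<in>{1..k}. {\<omega> \<in> space P. dist (\<omega> i) (\<omega> 0) < e})"
    by (auto simp: A_def mem_ball)
  have A: "A \<in> sets P" unfolding Aeq
    using cm by (intro sets.finite_UN) (auto, measurable)
  have ins: "{0..k} = insert 0 {1..k}" by auto
  have "emeasure P A = (\<integral>\<^sup>+\<omega>. indicator A \<omega> \<partial>P)" using A by simp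
  also have "\<dots> = (\<integral>\<^sup>+x. (\<integral>\<^sup>+y. indicator A (y(0 := x)) \<partial>PiM {1..k} (\<lambda>_. M)) \<partial>M)"
    unfolding P_def ins
    by (rule product_nn_integral_insert_rev) (use A in \<open>auto simp: P_def ins\<close>)
  also have "\<dots> = (\<integral>\<^sup>+x. ennreal (1 - (1 - measure M (ball x e)) ^ k) \<partial>M)"
  proof (rule nn_integral_cong)
    fix x assume "x \<in> space M"
    define Q where "Q = PiM {1..k} (\<lambda>_::nat. M)"
    interpret Q: prob_space Q unfolding Q_def by (intro prob_space_PiM) (simp add: assms(1))
    define C where "C = {y \<in> space Q. \<exists>i\<in>{1..k}. dist (y i) x < e}"
    have spQ: "space Q = PiE {1..k} (\<lambda>_. UNIV)" by (simp add: Q_def space_PiM sp)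
    have cmQ: "(\<lambda>\<omega>. \<omega> i) \<in> borel_measurable Q" if "i \<in> {1..k}" for i
      using measurable_component_singleton[OF that, of "\<lambda>_. M"] measurable_cong_sets[OF refl assms(2)]
      unfolding Q_def by blast
    have Ceq: "C = (\<Union>i\<in>{1..k}. {\<omega> \<in> space Q. dist (\<omega> i) x < e})"
      by (auto simp: C_def)
    have CS: "C \<in> sets Q" unfolding Ceq
      using cmQ by (intro sets.finite_UN) (auto, measurable)
    have "(\<integral>\<^sup>+y. indicator A (y(0 := x)) \<partial>Q) = (\<integral>\<^sup>+y. indicator C y \<partial>Q)"
    proof (rule nn_integral_cong)
      fix y assume y: "y \<in> space Q"
      have "y(0 := x) \<in> space P" using y by (auto simp: spQ P_def space_PiM sp PiE_def extensional_def)
      then have "(y(0 := x) \<in> A) = (y \<in> C)" using y by (auto simp: A_def C_def mem_ball)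
      then show "indicator A (y(0 := x)) = (indicator C y :: ennreal)" by (simp add: indicator_def)
    qed
    also have "\<dots> = emeasure Q C"
      by (rule nn_integral_indicator[OF CS])
    also have "emeasure Q C = ennreal (1 - (1 - measure M (ball x e)) ^ k)"
    proof -
      have D: "space Q - C = PiE {1..k} (\<lambda>_. - ball x e)"
        by (auto simp: C_def spQ PiE_def mem_ball dist_commute)
      have "emeasure Q (space Q - C) = (\<Prod>i\<in>{1..k}. emeasure M (- ball x e))"
        unfolding D unfolding Q_def by (rule emeasure_PiM) (auto simp: assms(2))
      also have "\<dots> = (\<Prod>i\<in>{1..k}. ennreal (1 - measure M (ball x e)))"
        using prob_compl[OF ball_sets[of x]] by (simp add: sp emeasure_eq_measure Compl_eq_Diff_UNIV)
      also have "\<dots> = ennreal ((1 - measure M (ball x e)) ^ k)"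
        by (simp add: ennreal_power)
      finally have "Q.prob (space Q - C) = (1 - measure M (ball x e)) ^ k"
        by (simp add: Q.emeasure_eq_measure)
      then have "Q.prob C = 1 - (1 - measure M (ball x e)) ^ k"
        using Q.prob_compl[OF CS] by simp
      then show ?thesis by (simp add: Q.emeasure_eq_measure)
    qed
    finally show "(\<integral>\<^sup>+y. indicator A (y(0 := x)) \<partial>PiM {1..k} (\<lambda>_. M)) = ennreal (1 - (1 - measure M (ball x e)) ^ k)" 
      unfolding Q_def .
  qed
  finally have E: "emeasure P A = (\<integral>\<^sup>+x. ennreal (1 - (1 - measure M (ball x e)) ^ k) \<partial>M)" .
  have nn: "0 \<le> 1 - (1 - measure M (ball x e)) ^ k" for x
  proof -
    have "0 \<le> 1 - measure M (ball x e)" "1 - measure M (ball x e) \<le> 1" by auto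
    then have "(1 - measure M (ball x e)) ^ k \<le> 1" by (rule power_le_one)
    then show ?thesis by simp
  qed
  have gm: "(\<lambda>x. 1 - (1 - measure M (ball x e)) ^ k) \<in> borel_measurable M"
    using ball_mass_meas[OF assms, of e] by measurable
  have "subcov_prob M e k = enn2real (emeasure P A)"
    by (simp add: subcov_prob_def P_def A_def measure_def)
  also have "\<dots> = (\<integral>x. 1 - (1 - measure M (ball x e)) ^ k \<partial>M)"
    unfolding E by (rule enn2real_nn_integral_eq_integral) (use nn gm in auto)
  finally show ?thesis .
qed

lemma closed_supp:
  fixes M :: "'a::polish_space measure"
  assumes "prob_space M" and "sets M = sets borel"
  shows "closed (supp M)"
proof -
  interpret prob_space M by fact
  have ball_sets: "ball x r \<in> sets M" for x r using assms(2) by simp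
  show ?thesis unfolding closed_def
  proof (rule openI)
    fix x assume "x \<in> - supp M"
    then obtain r where r: "r > 0" "\<not> measure M (ball x r) > 0" by (auto simp: supp_def)
    have "ball y (r/2) \<subseteq> ball x r" if "y \<in> ball x (r/2)" for y
      using that by (auto simp: mem_ball) metric
    then have "measure M (ball y (r/2)) \<le> 0" if "y \<in> ball x (r/2)" for y
      using that r finite_measure_mono[OF _ ball_sets, of "ball y (r/2)" x r] by force
    then have "ball x (r/2) \<subseteq> - supp M"
    proof (intro subsetI)
      fix y assume "\<And>y. y \<in> ball x (r/2) \<Longrightarrow> measure M (ball y (r/2)) \<le> 0" "y \<in> ball x (r/2)"
      then have "\<not> measure M (ball y (r/2)) > 0" by force
      then show "y \<in> - supp M" using r(1) unfolding supp_def by (auto intro!: exI[of _ "r/2"])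
    qed
    then show "\<exists>\<epsilon>>0. ball x \<epsilon> \<subseteq> - supp M" using r(1) by (intro exI[of _ "r/2"]) auto
  qed
qed

lemma AE_supp:
  fixes M :: "'a::polish_space measure"
  assumes "prob_space M" and "sets M = sets borel"
  shows "AE x in M. x \<in> supp M"
proof -
  interpret prob_space M by fact
  have ball_sets: "ball x r \<in> sets M" for x r using assms(2) by simp
  obtain B :: "'a set set" where B: "countable B" "topological_basis B"
    using ex_countable_basis by blast
  have Bo: "open b" if "b \<in> B" for b using B(2) that by (auto simp: topological_basis_def)
  define I where "I = {b \<in> B. measure M b = 0}"
  have N: "(\<Union>b\<in>I. b) \<in> null_sets M"
  proof (rule null_sets_UN')
    show "countable I" using B(1) by (auto simp: I_def)
    fix b assume "b \<in> I"
    then have "b \<in> sets M" "measure M b = 0" using Bo assms(2) by (auto simp: I_def)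
    then show "b \<in> null_sets M" by (simp add: emeasure_eq_measure null_setsI)
  qed
  show ?thesis
  proof (rule AE_I'[OF N], safe)
    fix x assume "x \<notin> supp M"
    then obtain r where r: "r > 0" "\<not> measure M (ball x r) > 0" by (auto simp: supp_def)
    then have m0: "measure M (ball x r) = 0" using measure_nonneg[of M "ball x r"] by linarith
    obtain b where b: "b \<in> B" "x \<in> b" "b \<subseteq> ball x r"
      by (meson B(2) centre_in_ball open_ball r(1) topological_basisE)
    have "measure M b \<le> 0" using finite_measure_mono[OF b(3) ball_sets] m0 by simp
    then have "b \<in> I" using b(1) measure_nonneg[of M b] by (auto simp: I_def)
    then show "x \<in> (\<Union>b\<in>I. b)" using b(2) by blast
  qed
qed

lemma supp_ne:
  fixes M :: "'a::polish_space measure"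
  assumes "prob_space M" and "sets M = sets borel"
  shows "supp M \<noteq> {}"
proof
  interpret prob_space M by fact
  assume "supp M = {}"
  then show False using AE_supp[OF assms] AE_False by simp
qed

lemma g_bounds:
  fixes M :: "'a::polish_space measure"
  assumes "prob_space M"
  shows "0 \<le> 1 - (1 - measure M (ball x e)) ^ k \<and> 1 - (1 - measure M (ball x e)) ^ k \<le> 1"
proof -
  interpret prob_space M by fact
  have "0 \<le> 1 - measure M (ball x e)" "1 - measure M (ball x e) \<le> 1" by auto
  then have "(1 - measure M (ball x e)) ^ k \<le> 1" "0 \<le> (1 - measure M (ball x e)) ^ k"
    by (auto intro: power_le_one)
  then show ?thesis by simp
qed

lemma g_meas:
  fixes M :: "'a::polish_space measure"
  assumes "prob_space M" and "sets M = sets borel"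
  shows "(\<lambda>x. 1 - (1 - measure M (ball x e)) ^ k) \<in> borel_measurable M"
  using ball_mass_meas[OF assms, of e] by measurable

lemma g_int:
  fixes M :: "'a::polish_space measure"
  assumes "prob_space M" and "sets M = sets borel"
  shows "integrable M (\<lambda>x. 1 - (1 - measure M (ball x e)) ^ k)"
proof -
  interpret prob_space M by fact
  show ?thesis
    by (rule integrable_const_bound[where B=1]) (use g_bounds[OF assms(1)] g_meas[OF assms] in auto)
qed

lemma compact_imp_pos:
  fixes M :: "'a::polish_space measure"
  assumes "prob_space M" and "sets M = sets borel" and "compact (supp M)" and "e > 0"
  shows "inf_ball_mass M e > 0"
proof -
  interpret prob_space M by fact
  have ball_sets: "ball x r \<in> sets M" for x r using assms(2) by simp
  have "supp M \<subseteq> (\<Union>c\<in>supp M. ball c (e/2))" using assms(4) by auto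
  then obtain T where T: "T \<subseteq> supp M" "finite T" "supp M \<subseteq> (\<Union>c\<in>T. ball c (e/2))"
    using compactE_image[OF assms(3), of "supp M" "\<lambda>c. ball c (e/2)"] by auto
  have Tne: "T \<noteq> {}" using T(3) supp_ne[OF assms(1,2)] by auto
  define d where "d = Min ((\<lambda>t. measure M (ball t (e/2))) ` T)"
  have dpos: "d > 0" unfolding d_def using T Tne assms(4)
    by (subst Min_gr_iff) (auto simp: supp_def)
  have "d \<le> measure M (ball y e)" if y: "y \<in> supp M" for y
  proof -
    obtain t where t: "t \<in> T" "y \<in> ball t (e/2)" using T(3) y by auto
    have "ball t (e/2) \<subseteq> ball y e" using t(2) by (auto simp: mem_ball) metric
    then have "measure M (ball t (e/2)) \<le> measure M (ball y e)"
      by (rule finite_measure_mono) (rule ball_sets)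
    moreover have "d \<le> measure M (ball t (e/2))" unfolding d_def using T(2) t(1) by auto
    ultimately show ?thesis by linarith
  qed
  then have "d \<le> inf_ball_mass M e" unfolding inf_ball_mass_def
    by (intro cINF_greatest supp_ne[OF assms(1,2)])
  with dpos show ?thesis by linarith
qed

lemma pos_imp_compact:
  fixes M :: "'a::polish_space measure"
  assumes "prob_space M" and "sets M = sets borel" and pos: "\<forall>e>0. inf_ball_mass M e > 0"
  shows "compact (supp M)"
proof -
  interpret prob_space M by fact
  have ball_sets: "ball x r \<in> sets M" for x r using assms(2) by simp
  have "Topological_Spaces.complete (supp M)" using closed_supp[OF assms(1,2)] complete_eq_closed by blast
  moreover have "\<exists>K. finite K \<and> supp M \<subseteq> (\<Union>x\<in>K. ball x e)" if e: "e > 0" for e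
  proof -
    define d where "d = inf_ball_mass M (e/2)"
    have dpos: "d > 0" using pos e by (simp add: d_def)
    have bdd: "bdd_below ((\<lambda>x. measure M (ball x (e/2))) ` supp M)"
      by (rule bdd_belowI2[of _ 0]) simp
    have dle: "d \<le> measure M (ball x (e/2))" if "x \<in> supp M" for x
      unfolding d_def inf_ball_mass_def by (rule cINF_lower[OF bdd that])
    define Sep where "Sep F \<longleftrightarrow> finite F \<and> F \<subseteq> supp M \<and> (\<forall>x\<in>F. \<forall>y\<in>F. x \<noteq> y \<longrightarrow> e \<le> dist x y)" for F
    define b where "b = nat \<lceil>1/d\<rceil>"
    have cardb: "card F \<le> b" if "Sep F" for F
    proof -
      have F: "finite F" "F \<subseteq> supp M" "\<And>x y. x \<in> F \<Longrightarrow> y \<in> F \<Longrightarrow> x \<noteq> y \<Longrightarrow> e \<le> dist x y"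
        using that by (auto simp: Sep_def)
      have disj: "disjoint_family_on (\<lambda>x. ball x (e/2)) F"
        unfolding disjoint_family_on_def
      proof (intro ballI impI)
        fix x y assume xy: "x \<in> F" "y \<in> F" "x \<noteq> y"
        have "e \<le> dist x y" using F(3)[OF xy] .
        then show "ball x (e/2) \<inter> ball y (e/2) = {}" by (auto simp: mem_ball) metric
      qed
      have "real (card F) * d = (\<Sum>x\<in>F. d)" by simp
      also have "\<dots> \<le> (\<Sum>x\<in>F. measure M (ball x (e/2)))"
        using F(2) dle by (intro sum_mono) auto
      also have "\<dots> = measure M (\<Union>x\<in>F. ball x (e/2))"
        by (rule finite_measure_finite_Union[symmetric]) (use F(1) disj ball_sets in auto)
      also have "\<dots> \<le> 1" by simp
      finally have "real (card F) * d \<le> 1" .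
      then have "real (card F) \<le> 1/d" using dpos by (simp add: pos_le_divide_eq)
      also have "\<dots> \<le> real b" unfolding b_def by (rule real_nat_ceiling_ge)
      finally show ?thesis by simp
    qed
    have "\<exists>n. (\<exists>F. Sep F \<and> card F = n) \<and> (\<forall>m. (\<exists>F. Sep F \<and> card F = m) \<longrightarrow> m \<le> n)"
    proof (rule Nat.ex_has_greatest_nat[of _ 0 b])
      have "Sep {}" by (simp add: Sep_def)
      then show "\<exists>F. Sep F \<and> card F = 0" by (intro exI[of _ "{}"]) simp
      show "\<forall>y. (\<exists>F. Sep F \<and> card F = y) \<longrightarrow> y \<le> b" using cardb by blast
    qed
    then obtain n F where F: "Sep F" "card F = n" and mx: "\<And>G. Sep G \<Longrightarrow> card G \<le> n" by blast
    have "supp M \<subseteq> (\<Union>x\<in>F. ball x e)"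
    proof
      fix y assume y: "y \<in> supp M"
      show "y \<in> (\<Union>x\<in>F. ball x e)"
      proof (rule ccontr)
        assume "y \<notin> (\<Union>x\<in>F. ball x e)"
        then have far: "\<And>x. x \<in> F \<Longrightarrow> e \<le> dist x y" by (auto simp: mem_ball not_less)
        then have yF: "y \<notin> F" using e by force
        have "Sep (insert y F)" using F(1) y far unfolding Sep_def
          by (simp add: dist_commute)
        then have "card (insert y F) \<le> n" by (rule mx)
        then show False using F yF by (simp add: Sep_def)
      qed
    qed
    then show ?thesis using F(1) by (auto simp: Sep_def)
  qed
  ultimately show ?thesis unfolding compact_eq_totally_bounded by blast
qed

theorem lemma3p8:
  fixes M :: "'a::polish_space measure"
  assumes "prob_space M" and "sets M = sets borel"
  shows "(\<forall>\<epsilon>>0. \<forall>k. 0 \<le> subcov_prob M \<epsilon> k \<and> subcov_prob M \<epsilon> k \<le> 1)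
    \<and> (\<forall>\<epsilon>>0. subcov_prob M \<epsilon> 0 = 0)
    \<and> (\<forall>\<epsilon>>0. subcov_prob M \<epsilon> 1 = (\<integral>x. measure M (ball x \<epsilon>) \<partial>M))
    \<and> (\<forall>\<epsilon>>0. (\<lambda>k. subcov_prob M \<epsilon> k) \<longlonglongrightarrow> 1)
    \<and> (compact (supp M) \<longleftrightarrow> (\<forall>\<epsilon>>0. inf_ball_mass M \<epsilon> > 0))
    \<and> (compact (supp M) \<longrightarrow>
         (\<forall>\<epsilon>>0. \<forall>k. subcov_prob M \<epsilon> k \<ge> 1 - (1 - inf_ball_mass M \<epsilon>) ^ k))"
proof -
  interpret prob_space M by fact
  note key = key_formula[OF assms]
  have P1: "0 \<le> subcov_prob M e k \<and> subcov_prob M e k \<le> 1" for e k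
  proof -
    interpret P: prob_space "PiM {0..k} (\<lambda>_::nat. M)" by (intro prob_space_PiM) (simp add: assms(1))
    show ?thesis unfolding subcov_prob_def by simp
  qed
  have P2: "subcov_prob M e 0 = 0" for e by (simp add: key)
  have P3: "subcov_prob M e 1 = (\<integral>x. measure M (ball x e) \<partial>M)" for e by (simp add: key)
  have P4: "(\<lambda>k. subcov_prob M e k) \<longlonglongrightarrow> 1" if epos: "e > 0" for e
  proof -
    have "(\<lambda>k. \<integral>x. 1 - (1 - measure M (ball x e)) ^ k \<partial>M) \<longlonglongrightarrow> (\<integral>x. 1 \<partial>M)"
    proof (rule integral_dominated_convergence[where w="\<lambda>_. 1"])
      show "(\<lambda>x. 1::real) \<in> borel_measurable M" by simp
      show "(\<lambda>x. 1 - (1 - measure M (ball x e)) ^ k) \<in> borel_measurable M" for k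
        by (rule g_meas[OF assms])
      show "integrable M (\<lambda>x. 1::real)" by simp
      show "AE x in M. norm (1 - (1 - measure M (ball x e)) ^ k) \<le> 1" for k
        using g_bounds[OF assms(1), of x e k for x] by simp
      show "AE x in M. (\<lambda>k. 1 - (1 - measure M (ball x e)) ^ k) \<longlonglongrightarrow> 1"
        using AE_supp[OF assms]
      proof eventually_elim
        case (elim x)
        then have "measure M (ball x e) > 0" using epos by (auto simp: supp_def)
        then have "norm (1 - measure M (ball x e)) < 1" by simp
        then have "(\<lambda>k. (1 - measure M (ball x e)) ^ k) \<longlonglongrightarrow> 0" by (rule LIMSEQ_power_zero)
        then have "(\<lambda>k. 1 - (1 - measure M (ball x e)) ^ k) \<longlonglongrightarrow> 1 - 0" by (intro tendsto_diff tendsto_const)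
        then show ?case by simp
      qed
    qed
    then show ?thesis by (simp add: key prob_space)
  qed
  have P6: "subcov_prob M e k \<ge> 1 - (1 - inf_ball_mass M e) ^ k" for e k
  proof -
    have bdd: "bdd_below ((\<lambda>x. measure M (ball x e)) ` supp M)"
      by (rule bdd_belowI2[of _ 0]) simp
    have "(\<integral>x. 1 - (1 - inf_ball_mass M e) ^ k \<partial>M) \<le> (\<integral>x. 1 - (1 - measure M (ball x e)) ^ k \<partial>M)"
    proof (rule integral_mono_AE)
      show "integrable M (\<lambda>x. 1 - (1 - inf_ball_mass M e) ^ k)" by simp
      show "integrable M (\<lambda>x. 1 - (1 - measure M (ball x e)) ^ k)" by (rule g_int[OF assms])
      show "AE x in M. 1 - (1 - inf_ball_mass M e) ^ k \<le> 1 - (1 - measure M (ball x e)) ^ k"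
        using AE_supp[OF assms]
      proof eventually_elim
        case (elim x)
        have "inf_ball_mass M e \<le> measure M (ball x e)"
          unfolding inf_ball_mass_def by (rule cINF_lower[OF bdd elim])
        then have "(1 - measure M (ball x e)) ^ k \<le> (1 - inf_ball_mass M e) ^ k"
          by (intro power_mono) auto
        then show ?case by simp
      qed
    qed
    then show ?thesis by (simp add: key prob_space)
  qed
  show ?thesis
    using P1 P2 P3 P4 P6 compact_imp_pos[OF assms] pos_imp_compact[OF assms] by blast
qed

end
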